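(* Let $\mathcal{H}$ be a finite family of digraphs, $h=\max_{H\in\mathcal{H}}|V(H)|$, and let $p\ge1$ be an integer. If $H^*\in\mathcal{H}^-_p$, then $|V(H^* )|\le h+(p-1)h^2$.
   Context: For a digraph $H$, $GPC(H)$ (good path completions) is the set of strongly connected digraphs of the form $H\cup P_1\cup\dots\cup P_\ell$ (union of vertex and arc sets), where each $P_i$ is a directed path with both end-points in $V(H)$ and the ordered pairs of end-points of the $P_i$ are pairwise distinct; $\{P_1,\dots,P_\ell\}$ is a witnessing collection of paths. $GPC(\mathcal{H})=\bigcup_{H\in\mathcal{H}}GPC(H)$. $\mathcal{H}^-_p$ is the set of digraphs in $GPC(\mathcal{H})$ that admit (for some $H\in\mathcal{H}$) a witnessing collection of paths all of length at most $p-1$, and $\mathcal{H}^+_p=GPC(\mathcal{H})\setminus\mathcal{H}^-_p$. *)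

theory Defs
  imports Main
begin

type_synonym 'a digraph = "'a set \<times> ('a \<times> 'a) set"

definition verts :: "'a digraph \<Rightarrow> 'a set" where "verts G = fst G"
definition arcs :: "'a digraph \<Rightarrow> ('a \<times> 'a) set" where "arcs G = snd G"

definition is_digraph :: "'a digraph \<Rightarrow> bool" where
  "is_digraph G \<longleftrightarrow> finite (verts G) \<and> arcs G \<subseteq> verts G \<times> verts G
     \<and> (\<forall>v. (v, v) \<notin> arcs G)"

definition strongly_connected :: "'a digraph \<Rightarrow> bool" where
  "strongly_connected G \<longleftrightarrow> (\<forall>u\<in>verts G. \<forall>v\<in>verts G. (u, v) \<in> (arcs G)\<^sup>*)"

definition is_dpath :: "'a list \<Rightarrow> bool" where
  "is_dpath P \<longleftrightarrow> P \<noteq> [] \<and> distinct P"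

definition path_verts :: "'a list \<Rightarrow> 'a set" where "path_verts P = set P"

definition path_arcs :: "'a list \<Rightarrow> ('a \<times> 'a) set" where
  "path_arcs P = {(P ! i, P ! Suc i) | i. Suc i < length P}"

definition path_len :: "'a list \<Rightarrow> nat" where "path_len P = length P - 1"

definition path_ends :: "'a list \<Rightarrow> 'a \<times> 'a" where "path_ends P = (hd P, last P)"

definition path_union :: "'a digraph \<Rightarrow> 'a list list \<Rightarrow> 'a digraph" where
  "path_union H Ps = (verts H \<union> (\<Union>P\<in>set Ps. path_verts P),
                      arcs H \<union> (\<Union>P\<in>set Ps. path_arcs P))"

definition witnessing :: "'a digraph \<Rightarrow> 'a list list \<Rightarrow> 'a digraph \<Rightarrow> bool" where
  "witnessing H Ps G \<longleftrightarrow>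
     (\<forall>P\<in>set Ps. is_dpath P \<and> hd P \<in> verts H \<and> last P \<in> verts H)
     \<and> distinct (map path_ends Ps)
     \<and> G = path_union H Ps
     \<and> strongly_connected G"

definition GPC :: "'a digraph \<Rightarrow> 'a digraph set" where
  "GPC H = {G. \<exists>Ps. witnessing H Ps G}"

definition GPC_fam :: "'a digraph set \<Rightarrow> 'a digraph set" where
  "GPC_fam \<H> = (\<Union>H\<in>\<H>. GPC H)"

definition H_minus :: "'a digraph set \<Rightarrow> nat \<Rightarrow> 'a digraph set" where
  "H_minus \<H> p = {G. \<exists>H\<in>\<H>. \<exists>Ps. witnessing H Ps G \<and> (\<forall>P\<in>set Ps. path_len P \<le> p - 1)}"

definition H_plus :: "'a digraph set \<Rightarrow> nat \<Rightarrow> 'a digraph set" where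
  "H_plus \<H> p = GPC_fam \<H> - H_minus \<H> p"

end

theory Submission
  imports Defs
begin

lemma new_verts_bound:
  assumes "P \<noteq> []" "hd P \<in> V" "length P - 1 \<le> k"
  shows "card (set P - V) \<le> k"
proof -
  have "set P - V \<subseteq> set (tl P)" using assms(1,2)
    by (cases P) auto
  then have "card (set P - V) \<le> card (set (tl P))" by (simp add: card_mono)
  also have "\<dots> \<le> length (tl P)" by (rule card_length)
  finally show ?thesis using assms(3) by simp
qed

theorem lemma21:
  fixes \<H> :: "'a digraph set" and p :: nat and Hs :: "'a digraph"
  assumes "finite \<H>"
    and "\<forall>H\<in>\<H>. is_digraph H"
    and "p \<ge> 1"
    and "Hs \<in> H_minus \<H> p"
  shows "card (verts Hs) \<le> Max ((\<lambda>H. card (verts H)) ` \<H>)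
           + (p - 1) * (Max ((\<lambda>H. card (verts H)) ` \<H>))\<^sup>2"
proof -
  let ?h = "Max ((\<lambda>H. card (verts H)) ` \<H>)"
  obtain H Ps where H: "H \<in> \<H>" and W: "witnessing H Ps Hs"
    and L: "\<forall>P\<in>set Ps. path_len P \<le> p - 1"
    using assms(4) unfolding H_minus_def by blast
  have fin: "finite (verts H)" using assms(2) H unfolding is_digraph_def by blast
  have hH: "card (verts H) \<le> ?h" using assms(1) H by simp
  have P: "\<forall>P\<in>set Ps. is_dpath P \<and> hd P \<in> verts H \<and> last P \<in> verts H"
    and D: "distinct (map path_ends Ps)" and G: "Hs = path_union H Ps"
    using W unfolding witnessing_def by auto
  have vs: "verts Hs = verts H \<union> (\<Union>P\<in>set Ps. set P - verts H)"
    using G unfolding path_union_def verts_def path_verts_def by auto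
  have "card (verts Hs) \<le> card (verts H) + card (\<Union>P\<in>set Ps. set P - verts H)"
    unfolding vs by (rule card_Un_le)
  also have "card (\<Union>P\<in>set Ps. set P - verts H) \<le> (\<Sum>P\<in>set Ps. card (set P - verts H))"
    by (rule card_UN_le) simp
  also have "\<dots> \<le> (\<Sum>P\<in>set Ps. p - 1)"
  proof (rule sum_mono)
    fix Q assume "Q \<in> set Ps"
    then show "card (set Q - verts H) \<le> p - 1"
      using P L by (intro new_verts_bound) (auto simp: is_dpath_def path_len_def)
  qed
  also have "\<dots> = card (set Ps) * (p - 1)" by simp
  also have "card (set Ps) \<le> length Ps" by (rule card_length)
  also have "length Ps = card (set (map path_ends Ps))"
    using distinct_card[OF D] by simp
  also have "set (map path_ends Ps) \<subseteq> verts H \<times> verts H"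
    using P by (auto simp: path_ends_def)
  then have "card (set (map path_ends Ps)) \<le> card (verts H \<times> verts H)"
    using fin by (intro card_mono) auto
  also have "card (verts H \<times> verts H) = (card (verts H))\<^sup>2"
    by (simp add: card_cartesian_product power2_eq_square)
  also have "(card (verts H))\<^sup>2 \<le> ?h\<^sup>2" using hH by (simp add: power_mono)
  finally show ?thesis using hH by (simp add: mult.commute)
qed

end
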